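(* Let $\mathcal{H}^c_{A_{n-1}}$ be the degenerate affine Hecke–Clifford algebra of type $A_{n-1}$ and let $w_{(n)}=s_1s_2\cdots s_{n-1}$, the $n$-cycle $(1\,2\,\cdots\,n)$. For every subset $I\subseteq\{1,\dots,n\}$ with $|I|$ even there is $\epsilon\in\{1,-1\}$ with $w_{(n)}c_I-\epsilon\, w_{(n)}\in[\mathcal{H}^c_{A_{n-1}},\mathcal{H}^c_{A_{n-1}}]$.
   Context: $\mathcal{H}^c_{A_{n-1}}$ (parameter $u\in\mathbb{C}$) is the $\mathbb{C}$-algebra generated by commuting $x_1,\dots,x_n$, Clifford generators $c_1,\dots,c_n$ ($c_i^2=1$, $c_ic_j=-c_jc_i$ for $i\ne j$) and the symmetric group $S_n$ (simple reflections $s_i=(i,i+1)$), with $\mathbb{C}[x]$, the Clifford algebra and $\mathbb{C}S_n$ subalgebras and relations $x_ic_i=-c_ix_i$, $x_ic_j=c_jx_i$ ($i\ne j$), $\sigma c_i=c_{\sigma(i)}\sigma$ ($\sigma\in S_n$), $x_{i+1}s_i-s_ix_i=u(1-c_{i+1}c_i)$, $x_js_i=s_ix_j$ ($j\ne i,i+1$). For $I=\{i_1<\dots<i_m\}$, $c_I=c_{i_1}\cdots c_{i_m}$. $[H,H]$ denotes the linear span of all commutators $hh'-h'h$. *)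

theory Defs
  imports Complex_Main "HOL-Combinatorics.Transposition" "HOL-Combinatorics.Permutations"
begin

text \<open>A unital associative C-algebra is encoded as a ring together with a central
unital ring homomorphism emb from the complex numbers (the scalars).\<close>

definition central_scalars :: "(complex \<Rightarrow> 'a::ring_1) \<Rightarrow> bool" where
  "central_scalars emb \<longleftrightarrow>
     emb 1 = 1 \<and> (\<forall>a b. emb (a + b) = emb a + emb b) \<and>
     (\<forall>a b. emb (a * b) = emb a * emb b) \<and> (\<forall>a y. emb a * y = y * emb a)"

inductive_set comm_span :: "(complex \<Rightarrow> 'a::ring_1) \<Rightarrow> 'a set" for emb where
  zero: "0 \<in> comm_span emb"
| comm: "a * b - b * a \<in> comm_span emb"
| add: "x \<in> comm_span emb \<Longrightarrow> y \<in> comm_span emb \<Longrightarrow> x + y \<in> comm_span emb"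
| smult: "x \<in> comm_span emb \<Longrightarrow> emb z * x \<in> comm_span emb"

definition HC_relations ::
  "nat \<Rightarrow> complex \<Rightarrow> (complex \<Rightarrow> 'a::ring_1) \<Rightarrow> (nat \<Rightarrow> 'a) \<Rightarrow> (nat \<Rightarrow> 'a)
     \<Rightarrow> ((nat \<Rightarrow> nat) \<Rightarrow> 'a) \<Rightarrow> bool" where
  "HC_relations n u emb x c T \<longleftrightarrow>
     central_scalars emb \<and>
     (\<forall>i\<in>{1..n}. \<forall>j\<in>{1..n}. x i * x j = x j * x i) \<and>
     (\<forall>i\<in>{1..n}. c i * c i = 1) \<and>
     (\<forall>i\<in>{1..n}. \<forall>j\<in>{1..n}. i \<noteq> j \<longrightarrow> c i * c j = - (c j * c i)) \<and>
     T id = 1 \<and>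
     (\<forall>\<sigma> \<tau>. \<sigma> permutes {1..n} \<longrightarrow> \<tau> permutes {1..n} \<longrightarrow> T (\<sigma> \<circ> \<tau>) = T \<sigma> * T \<tau>) \<and>
     (\<forall>i\<in>{1..n}. x i * c i = - (c i * x i)) \<and>
     (\<forall>i\<in>{1..n}. \<forall>j\<in>{1..n}. i \<noteq> j \<longrightarrow> x i * c j = c j * x i) \<and>
     (\<forall>\<sigma> i. \<sigma> permutes {1..n} \<longrightarrow> i \<in> {1..n} \<longrightarrow> T \<sigma> * c i = c (\<sigma> i) * T \<sigma>) \<and>
     (\<forall>i. 1 \<le> i \<and> i < n \<longrightarrow>
        x (i+1) * T (transpose i (i+1)) - T (transpose i (i+1)) * x i
          = emb u * (1 - c (i+1) * c i)) \<and>
     (\<forall>i j. 1 \<le> i \<and> i < n \<longrightarrow> j \<in> {1..n} \<longrightarrow> j \<noteq> i \<longrightarrow> j \<noteq> i+1 \<longrightarrow>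
        x j * T (transpose i (i+1)) = T (transpose i (i+1)) * x j)"

definition w_cycle :: "nat \<Rightarrow> ((nat \<Rightarrow> nat) \<Rightarrow> 'a::ring_1) \<Rightarrow> 'a" where
  "w_cycle n T = prod_list (map (\<lambda>i. T (transpose i (i+1))) [1..<n])"

definition cliff_prod :: "(nat \<Rightarrow> 'a::ring_1) \<Rightarrow> nat set \<Rightarrow> 'a" where
  "cliff_prod c I = prod_list (map c (sorted_list_of_set I))"

end

theory Submission
  imports Defs
begin

lemma cs_neg: "a \<in> comm_span emb \<Longrightarrow> - a \<in> comm_span emb"
proof (induction rule: comm_span.induct)
  case zero then show ?case by (simp add: comm_span.zero)
next
  case (comm a b)
  have "b * a - a * b \<in> comm_span emb" by (rule comm_span.comm)
  then show ?case by simp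
next
  case (add x y)
  then show ?case using comm_span.add[of "-x" emb "-y"] by (simp add: add.commute)
next
  case (smult x z)
  then show ?case using comm_span.smult[of "-x" emb z] by simp
qed

lemma cs_sign: "(e::int) \<in> {1,-1} \<Longrightarrow> y \<in> comm_span emb \<Longrightarrow> of_int e * y \<in> comm_span emb"
  using cs_neg by auto

definition Eq :: "(complex \<Rightarrow> 'a::ring_1) \<Rightarrow> 'a \<Rightarrow> 'a \<Rightarrow> bool" where
  "Eq emb a b \<longleftrightarrow> (\<exists>\<epsilon>::int. \<epsilon> \<in> {1,-1} \<and> a - of_int \<epsilon> * b \<in> comm_span emb)"

lemma Eq_pm: "a = b \<or> a = - b \<Longrightarrow> Eq emb a b"
  unfolding Eq_def
proof -
  assume "a = b \<or> a = - b"
  then show "\<exists>\<epsilon>::int. \<epsilon> \<in> {1,-1} \<and> a - of_int \<epsilon> * b \<in> comm_span emb"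
  proof
    assume "a = b" then show ?thesis by (intro exI[of _ 1]) (simp add: comm_span.zero)
  next
    assume "a = - b" then show ?thesis by (intro exI[of _ "-1"]) (simp add: comm_span.zero)
  qed
qed

lemma Eq_trans: assumes "Eq emb a b" "Eq emb b d" shows "Eq emb a d"
proof -
  obtain e where e: "e \<in> {1,-1::int}" "a - of_int e * b \<in> comm_span emb"
    using assms(1) unfolding Eq_def by blast
  obtain f where f: "f \<in> {1,-1::int}" "b - of_int f * d \<in> comm_span emb"
    using assms(2) unfolding Eq_def by blast
  have "a - of_int (e*f) * d = (a - of_int e * b) + of_int e * (b - of_int f * d)"
    by (simp add: algebra_simps)
  moreover have "\<dots> \<in> comm_span emb"
    by (rule comm_span.add[OF e(2) cs_sign[OF e(1) f(2)]])
  moreover have "e*f \<in> {1,-1}" using e(1) f(1) by auto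
  ultimately show ?thesis unfolding Eq_def by metis
qed

lemma Eq_conj: assumes "g * g = 1" shows "Eq emb z (g * z * g)"
proof -
  have "z - of_int 1 * (g * z * g) = (z * g) * g - g * (z * g)"
    using assms by (simp add: mult.assoc)
  then show ?thesis unfolding Eq_def using comm_span.comm by (metis insertI1)
qed

definition cp :: "(nat \<Rightarrow> 'a::ring_1) \<Rightarrow> nat list \<Rightarrow> 'a" where
  "cp c L = prod_list (map c L)"

lemma W_lemma:
  assumes H: "HC_relations n u emb x c T"
  shows "m \<le> n \<Longrightarrow>
    (\<forall>k. 1 \<le> k \<and> k < m \<longrightarrow> prod_list (map (\<lambda>i. T (transpose i (i+1))) [1..<m]) * c k
        = c (k+1) * prod_list (map (\<lambda>i. T (transpose i (i+1))) [1..<m])) \<and>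
    (\<forall>j. m < j \<and> j \<le> n \<longrightarrow> prod_list (map (\<lambda>i. T (transpose i (i+1))) [1..<m]) * c j
        = c j * prod_list (map (\<lambda>i. T (transpose i (i+1))) [1..<m]))"
proof (induction m)
  case 0 then show ?case by simp
next
  case (Suc m)
  have rel: "\<And>\<sigma> i. \<sigma> permutes {1..n} \<Longrightarrow> i \<in> {1..n} \<Longrightarrow> T \<sigma> * c i = c (\<sigma> i) * T \<sigma>"
    using H unfolding HC_relations_def by blast
  show ?case
  proof (cases "m = 0")
    case True then show ?thesis by simp
  next
    case False
    let ?W = "prod_list (map (\<lambda>i. T (transpose i (i+1))) [1..<m])"
    let ?s = "T (transpose m (m+1))"
    have IH: "\<forall>k. 1 \<le> k \<and> k < m \<longrightarrow> ?W * c k = c (k+1) * ?W"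
       "\<forall>j. m < j \<and> j \<le> n \<longrightarrow> ?W * c j = c j * ?W" using Suc by auto
    have W: "prod_list (map (\<lambda>i. T (transpose i (i+1))) [1..<Suc m]) = ?W * ?s"
      using False by simp
    have perm: "transpose m (m+1) permutes {1..n}"
      using False Suc.prems by (intro permutes_swap_id) auto
    have A: "\<forall>k. 1 \<le> k \<and> k < Suc m \<longrightarrow> ?W * ?s * c k = c (k+1) * (?W * ?s)"
    proof (intro allI impI)
      fix k assume k: "1 \<le> k \<and> k < Suc m"
      have "?W * ?s * c k = ?W * (c (transpose m (m+1) k) * ?s)"
        using rel[OF perm, of k] k Suc.prems by (simp add: mult.assoc)
      show "?W * ?s * c k = c (k+1) * (?W * ?s)"
      proof (cases "k = m")
        case True
        have "?W * ?s * c k = ?W * (c (m+1) * ?s)"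
          using rel[OF perm, of k] k Suc.prems True by (simp add: mult.assoc)
        also have "\<dots> = c (m+1) * (?W * ?s)"
          using IH(2) Suc.prems by (simp add: mult.assoc[symmetric])
        finally show ?thesis using True by simp
      next
        case False
        have "?W * ?s * c k = ?W * (c k * ?s)"
          using rel[OF perm, of k] k Suc.prems False by (simp add: mult.assoc)
        also have "\<dots> = c (k+1) * (?W * ?s)"
          using IH(1) k False by (simp add: mult.assoc[symmetric])
        finally show ?thesis .
      qed
    qed
    have B: "\<forall>j. Suc m < j \<and> j \<le> n \<longrightarrow> ?W * ?s * c j = c j * (?W * ?s)"
    proof (intro allI impI)
      fix j assume j: "Suc m < j \<and> j \<le> n"
      have "?W * ?s * c j = ?W * (c j * ?s)"
        using rel[OF perm, of j] j by (simp add: mult.assoc)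
      also have "\<dots> = c j * (?W * ?s)"
        using IH(2) j by (simp add: mult.assoc[symmetric])
      finally show "?W * ?s * c j = c j * (?W * ?s)" .
    qed
    show ?thesis using A B W by simp
  qed
qed

lemma c_swap: assumes H: "HC_relations n u emb x c T" and "a \<in> {1..n}" "b \<in> {1..n}"
  shows "c a * c b = c b * c a \<or> c a * c b = - (c b * c a)"
proof (cases "a = b")
  case True then show ?thesis by simp
next
  case False
  have "\<forall>i\<in>{1..n}. \<forall>j\<in>{1..n}. i \<noteq> j \<longrightarrow> c i * c j = - (c j * c i)"
    using H unfolding HC_relations_def by blast
  then show ?thesis using False assms(2,3) by blast
qed

lemma c_move: assumes H: "HC_relations n u emb x c T" and "a \<in> {1..n}" "set L \<subseteq> {1..n}"
  shows "cp c L * c a = c a * cp c L \<or> cp c L * c a = - (c a * cp c L)"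
  using assms(3)
proof (induction L)
  case Nil then show ?case by (simp add: cp_def)
next
  case (Cons b L)
  have b: "b \<in> {1..n}" using Cons by auto
  have ih: "cp c L * c a = c a * cp c L \<or> cp c L * c a = - (c a * cp c L)" using Cons by auto
  have sw: "c b * c a = c a * c b \<or> c b * c a = - (c a * c b)"
    using c_swap[OF H b assms(2)] .
  have e: "cp c (b # L) * c a = c b * (cp c L * c a)" by (simp add: cp_def mult.assoc)
  let ?P = "cp c L"
  have f1: "c b * (c a * ?P) = (c b * c a) * ?P" "c a * (c b * ?P) = (c a * c b) * ?P"
    by (simp_all add: mult.assoc)
  have g: "c b * (?P * c a) = c b * (c a * ?P) \<or> c b * (?P * c a) = - (c b * (c a * ?P))"
    using ih by auto
  have h: "c b * (c a * ?P) = c a * (c b * ?P) \<or> c b * (c a * ?P) = - (c a * (c b * ?P))"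
    unfolding f1 using sw by auto
  have e2: "c a * cp c (b # L) = c a * (c b * ?P)" by (simp add: cp_def)
  show ?case unfolding e e2 using g h by auto
qed

lemma cp_rep: assumes "c 1 * c 1 = 1" shows "even m \<Longrightarrow> cp c (replicate m 1) = 1"
proof -
  assume "even m"
  then obtain q where "m = 2*q" by blast
  then show ?thesis using assms
    by (simp add: cp_def prod_list_replicate power_mult power2_eq_square)
qed

lemma main_ind:
  assumes H: "HC_relations n u emb x c T"
  shows "set L \<subseteq> {1..n} \<Longrightarrow> even (length L) \<Longrightarrow> Eq emb (w_cycle n T * cp c L) (w_cycle n T)"
proof (induction "sum_list L" arbitrary: L rule: less_induct)
  case less
  let ?w = "w_cycle n T"
  have cc: "\<And>i. i \<in> {1..n} \<Longrightarrow> c i * c i = 1" using H unfolding HC_relations_def by blast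
  have wc: "\<And>k. 1 \<le> k \<Longrightarrow> k < n \<Longrightarrow> ?w * c k = c (k+1) * ?w"
    using W_lemma[OF H, of n] unfolding w_cycle_def by auto
  show ?case
  proof (cases "\<exists>y \<in> set L. y \<ge> 2")
    case False
    then have "\<forall>y\<in>set L. y = 1" using less.prems(1) by fastforce
    then have "L = replicate (length L) 1" by (simp add: replicate_eqI)
    moreover have "L \<noteq> [] \<Longrightarrow> c 1 * c 1 = 1" using less.prems(1) cc
      by (cases L) auto
    ultimately have "cp c L = 1" using less.prems(2) cp_rep
      by (metis cp_def list.simps(8) prod_list.Nil)
    then show ?thesis by (simp add: Eq_pm)
  next
    case True
    then obtain y where y: "y \<in> set L" "y \<ge> 2" by blast
    then obtain L1 L2 where L: "L = L1 @ y # L2" by (meson split_list)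
    define k where "k = y - 1"
    have yk: "y = k + 1" "1 \<le> k" "k < n" using y less.prems(1) unfolding k_def by auto
    have s12: "set (L1 @ L2) \<subseteq> {1..n}" using less.prems(1) L by auto
    have yn: "y \<in> {1..n}" using y less.prems(1) by auto
    have m1: "cp c L = cp c L1 * c y * cp c L2" by (simp add: L cp_def mult.assoc)
    have "cp c L2 * c y = c y * cp c L2 \<or> cp c L2 * c y = - (c y * cp c L2)"
      using c_move[OF H yn] s12 by auto
    then have "cp c L = cp c (L1 @ L2) * c y \<or> cp c L = - (cp c (L1 @ L2) * c y)"
      unfolding m1 by (auto simp: cp_def mult.assoc)
    then have "?w * cp c L = ?w * cp c (L1 @ L2) * c y \<or> ?w * cp c L = - (?w * cp c (L1 @ L2) * c y)"
      by (auto simp: mult.assoc)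
    then have E1: "Eq emb (?w * cp c L) (?w * cp c (L1 @ L2) * c y)" by (rule Eq_pm)
    have E2: "Eq emb (?w * cp c (L1 @ L2) * c y) (c y * (?w * cp c (L1 @ L2) * c y) * c y)"
      by (rule Eq_conj[OF cc[OF yn]])
    have "c y * (?w * cp c (L1 @ L2) * c y) * c y = c y * ?w * cp c (L1 @ L2) * (c y * c y)"
      by (simp add: mult.assoc)
    also have "\<dots> = ?w * cp c (k # L1 @ L2)"
      using wc[OF yk(2,3)] cc[OF yn] yk(1) by (simp add: cp_def mult.assoc[symmetric])
    finally have eq3: "c y * (?w * cp c (L1 @ L2) * c y) * c y = ?w * cp c (k # L1 @ L2)" .
    have "Eq emb (?w * cp c (k # L1 @ L2)) ?w"
      using less.hyps[of "k # L1 @ L2"] s12 yk less.prems(2) L by auto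
    then show ?thesis using E1 E2 eq3 Eq_trans by metis
  qed
qed

theorem lemma3p1p2:
  fixes n :: nat and u :: complex and emb :: "complex \<Rightarrow> 'a::ring_1"
    and x c :: "nat \<Rightarrow> 'a" and T :: "(nat \<Rightarrow> nat) \<Rightarrow> 'a" and I :: "nat set"
  assumes "HC_relations n u emb x c T"
    and "I \<subseteq> {1..n}" and "even (card I)"
  shows "\<exists>\<epsilon>::int. \<epsilon> \<in> {1, -1} \<and>
           w_cycle n T * cliff_prod c I - of_int \<epsilon> * w_cycle n T \<in> comm_span emb"
proof -
  have fin: "finite I" using assms(2) finite_subset by blast
  have "Eq emb (w_cycle n T * cp c (sorted_list_of_set I)) (w_cycle n T)"
    using main_ind[OF assms(1)] fin assms(2,3) by simp
  then show ?thesis unfolding Eq_def cp_def cliff_prod_def .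
qed

end
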